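(* Let $C\ge0$, $m\ge1$, $S_0,\dots,S_m$, $\lambda_0,\dots,\lambda_m$ and $f=\sum_{j=0}^m\lambda_j2^{-j/2}\chi_{S_j}$ be as in the setting below. Then for every integer $\tau\ge0$, \[ \sum_{Q\in\mathcal{Q}^\tau}f(Q)\lesssim\max_{\alpha,\beta\in\{1,2,3\}}\ \sum_{\substack{Q=(\xi_1,\xi_2,\xi_3,\xi_4)\in\mathcal{Q}^0_{\alpha,\beta}\\ \gcd(\xi_1-\xi_4)\mid\tau}}f(Q)+\|f\|_{\ell^2(\mathbb{Z}^2)}^4, \] with an absolute implicit constant.
   Context: Setting: $C\ge0$ is fixed, $m\ge1$ an integer, $S_0,\dots,S_m\subset\mathbb{Z}^2$ pairwise disjoint with $\#S_j\le2^j$, $\lambda_j\ge0$, $f=\sum_{j=0}^m\lambda_j2^{-j/2}\chi_{S_j}$, and for each $j$ and $\xi\in S_j$ there is at most one line $\ell\ni\xi$ with $\#(\ell\cap S_j)\ge2^{j/2+C}$. A parallelogram is a quadruple $Q=(\xi_1,\xi_2,\xi_3,\xi_4)\in(\mathbb{Z}^2)^4$ with $\xi_1+\xi_3=\xi_2+\xi_4$; $\tau_Q:=2|(\xi_1-\xi_2)\cdot(\xi_1-\xi_4)|$; $\mathcal{Q}^\tau$ is the set of parallelograms with $\tau_Q=\tau$; $f(Q):=f(\xi_1)f(\xi_2)f(\xi_3)f(\xi_4)$. For $(a,b)\in\mathbb{Z}^2\setminus\{0\}$, $\gcd((a,b)):=\gcd(a,b)$ (every integer divides $0$). A cross is a triple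 $(\xi,\ell_1,\ell_2)$ of two mutually orthogonal lines $\ell_1,\ell_2\subset\mathbb{R}^2$ meeting at $\xi$. For a cross with $\xi\in S_j$, let $a=\log_2\max\{\#(\ell_1\cap S_j),\#(\ell_2\cap S_j)\}$; the cross is of type 1 if $a\ge j/2+C$, type 2 if $1\le a<j/2+C$, type 3 if $a=0$. For a rectangle $(\xi_1,\xi_2,\xi_3,\xi_4)\in\mathcal{Q}^0$ with four distinct vertices, vertex $\xi_k$ (indices mod 4) is of type $\alpha$ if the cross $(\xi_k,\overleftrightarrow{\xi_k\xi_{k-1}},\overleftrightarrow{\xi_k\xi_{k+1}})$ is of type $\alpha$, where $\overleftrightarrow{\eta\zeta}$ is the line through $\eta,\zeta$. $\mathcal{Q}^0_{\alpha,\beta}$ is the set of rectangles in $\mathcal{Q}^0$ with four distinct vertices all in $\bigcup_jS_j$ such that $\xi_1,\xi_2$ are of type $\alpha$ and $\xi_3,\xi_4$ are of type $\beta$. *)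

theory Defs
  imports "HOL-Analysis.Analysis"
begin

type_synonym pt2 = "int \<times> int"
type_synonym quad = "pt2 \<times> pt2 \<times> pt2 \<times> pt2"

definition rpt :: "pt2 \<Rightarrow> real \<times> real" where
  "rpt \<xi> = (real_of_int (fst \<xi>), real_of_int (snd \<xi>))"

definition line_dir :: "(real \<times> real) set \<Rightarrow> real \<times> real \<Rightarrow> bool" where
  "line_dir L v \<longleftrightarrow> v \<noteq> 0 \<and> (\<exists>p. L = {p + t *\<^sub>R v | t. True})"

definition is_line :: "(real \<times> real) set \<Rightarrow> bool" where
  "is_line L \<longleftrightarrow> (\<exists>v. line_dir L v)"

definition line_through :: "pt2 \<Rightarrow> pt2 \<Rightarrow> (real \<times> real) set" where
  "line_through \<eta> \<zeta> = {rpt \<eta> + t *\<^sub>R (rpt \<zeta> - rpt \<eta>) | t. True}"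

definition lat_count :: "(real \<times> real) set \<Rightarrow> pt2 set \<Rightarrow> nat" where
  "lat_count L A = card {\<xi> \<in> A. rpt \<xi> \<in> L}"

definition is_cross :: "pt2 \<Rightarrow> (real \<times> real) set \<Rightarrow> (real \<times> real) set \<Rightarrow> bool" where
  "is_cross \<xi> l1 l2 \<longleftrightarrow> (\<exists>v1 v2. line_dir l1 v1 \<and> line_dir l2 v2 \<and> inner v1 v2 = 0)
      \<and> rpt \<xi> \<in> l1 \<and> rpt \<xi> \<in> l2"

definition cross_a :: "pt2 set \<Rightarrow> (real \<times> real) set \<Rightarrow> (real \<times> real) set \<Rightarrow> real" where
  "cross_a A l1 l2 = log 2 (real (max (lat_count l1 A) (lat_count l2 A)))"

definition cross_type :: "real \<Rightarrow> nat \<Rightarrow> pt2 set \<Rightarrow> (real \<times> real) set \<Rightarrow> (real \<times> real) set \<Rightarrow> nat \<Rightarrow> bool" where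
  "cross_type C j A l1 l2 \<alpha> \<longleftrightarrow>
     (let a = cross_a A l1 l2 in
       (\<alpha> = 1 \<and> a \<ge> real j / 2 + C) \<or>
       (\<alpha> = 2 \<and> 1 \<le> a \<and> a < real j / 2 + C) \<or>
       (\<alpha> = 3 \<and> a = 0))"

definition vertex_type :: "real \<Rightarrow> nat \<Rightarrow> (nat \<Rightarrow> pt2 set) \<Rightarrow> pt2 \<Rightarrow> pt2 \<Rightarrow> pt2 \<Rightarrow> nat \<Rightarrow> bool" where
  "vertex_type C m S xprev \<xi> xnext \<alpha> \<longleftrightarrow>
     (\<exists>j\<le>m. \<xi> \<in> S j \<and> cross_type C j (S j) (line_through \<xi> xprev) (line_through \<xi> xnext) \<alpha>)"

definition is_parallelogram :: "quad \<Rightarrow> bool" where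
  "is_parallelogram Q = (case Q of (\<xi>1, \<xi>2, \<xi>3, \<xi>4) \<Rightarrow> \<xi>1 + \<xi>3 = \<xi>2 + \<xi>4)"

definition dot2 :: "pt2 \<Rightarrow> pt2 \<Rightarrow> int" where
  "dot2 a b = fst a * fst b + snd a * snd b"

definition tauQ :: "quad \<Rightarrow> int" where
  "tauQ Q = (case Q of (\<xi>1, \<xi>2, \<xi>3, \<xi>4) \<Rightarrow> 2 * \<bar>dot2 (\<xi>1 - \<xi>2) (\<xi>1 - \<xi>4)\<bar>)"

definition gcd2 :: "pt2 \<Rightarrow> int" where
  "gcd2 v = gcd (fst v) (snd v)"

definition fS :: "nat \<Rightarrow> (nat \<Rightarrow> pt2 set) \<Rightarrow> (nat \<Rightarrow> real) \<Rightarrow> pt2 \<Rightarrow> real" where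
  "fS m S lam \<xi> = (\<Sum>j\<le>m. lam j * 2 powr (- real j / 2) * (if \<xi> \<in> S j then 1 else 0))"

definition fQ :: "(pt2 \<Rightarrow> real) \<Rightarrow> quad \<Rightarrow> real" where
  "fQ f Q = (case Q of (\<xi>1, \<xi>2, \<xi>3, \<xi>4) \<Rightarrow> f \<xi>1 * f \<xi>2 * f \<xi>3 * f \<xi>4)"

text \<open>Quadruples with all vertices in U (f(Q) = 0 otherwise when U is the support set).\<close>
definition quads_in :: "pt2 set \<Rightarrow> quad set" where
  "quads_in U = U \<times> U \<times> U \<times> U"

definition Q0_ab :: "real \<Rightarrow> nat \<Rightarrow> (nat \<Rightarrow> pt2 set) \<Rightarrow> nat \<Rightarrow> nat \<Rightarrow> quad set" where
  "Q0_ab C m S \<alpha> \<beta> = {(\<xi>1, \<xi>2, \<xi>3, \<xi>4) | \<xi>1 \<xi>2 \<xi>3 \<xi>4.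
      is_parallelogram (\<xi>1, \<xi>2, \<xi>3, \<xi>4) \<and> tauQ (\<xi>1, \<xi>2, \<xi>3, \<xi>4) = 0 \<and>
      distinct [\<xi>1, \<xi>2, \<xi>3, \<xi>4] \<and>
      (\<forall>\<xi>\<in>{\<xi>1, \<xi>2, \<xi>3, \<xi>4}. \<xi> \<in> (\<Union>j\<le>m. S j)) \<and>
      vertex_type C m S \<xi>4 \<xi>1 \<xi>2 \<alpha> \<and> vertex_type C m S \<xi>1 \<xi>2 \<xi>3 \<alpha> \<and>
      vertex_type C m S \<xi>2 \<xi>3 \<xi>4 \<beta> \<and> vertex_type C m S \<xi>3 \<xi>4 \<xi>1 \<beta>}"

end

theory Submission
  imports Defs
begin


definition Gf :: "'a set \<Rightarrow> ('a \<Rightarrow> int) \<Rightarrow> ('a \<Rightarrow> real) \<Rightarrow> int \<Rightarrow> real" where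
  "Gf X \<phi> F k = (\<Sum>\<eta>\<in>X. F \<eta> * (if \<phi> \<eta> = k then 1 else 0))"

lemma amgm: "(a::real) * b \<le> (a^2 + b^2) / 2"
proof -
  have "0 \<le> (a - b)^2" by simp
  thus ?thesis by (simp add: power2_eq_square algebra_simps)
qed

lemma Gf_zero: "k \<notin> \<phi> ` X \<Longrightarrow> Gf X \<phi> F k = 0"
  unfolding Gf_def by (rule sum.neutral) force

lemma shift_sum:
  fixes F :: "'a \<Rightarrow> real" and \<phi> :: "'a \<Rightarrow> int"
  assumes "finite X"
  shows "(\<Sum>\<xi>\<in>X. \<Sum>\<eta>\<in>X. F \<xi> * F \<eta> * (if \<phi> \<eta> = \<phi> \<xi> + c then 1 else 0))
       = (\<Sum>k\<in>\<phi> ` X. Gf X \<phi> F k * Gf X \<phi> F (k + c))"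
proof -
  have "(\<Sum>\<xi>\<in>X. \<Sum>\<eta>\<in>X. F \<xi> * F \<eta> * (if \<phi> \<eta> = \<phi> \<xi> + c then 1 else 0))
      = (\<Sum>\<xi>\<in>X. F \<xi> * Gf X \<phi> F (\<phi> \<xi> + c))"
    unfolding Gf_def by (simp add: sum_distrib_left mult.assoc)
  also have "\<dots> = (\<Sum>k\<in>\<phi> ` X. \<Sum>\<xi>\<in>{x. x \<in> X \<and> \<phi> x = k}. F \<xi> * Gf X \<phi> F (\<phi> \<xi> + c))"
    by (rule sum.group[symmetric]) (use assms in auto)
  also have "\<dots> = (\<Sum>k\<in>\<phi> ` X. Gf X \<phi> F k * Gf X \<phi> F (k + c))"
  proof (rule sum.cong[OF refl])
    fix k assume "k \<in> \<phi> ` X"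
    have "(\<Sum>\<xi>\<in>{x. x \<in> X \<and> \<phi> x = k}. F \<xi> * Gf X \<phi> F (\<phi> \<xi> + c))
        = (\<Sum>\<xi>\<in>{x. x \<in> X \<and> \<phi> x = k}. F \<xi>) * Gf X \<phi> F (k + c)"
      by (simp add: sum_distrib_right)
    also have "(\<Sum>\<xi>\<in>{x. x \<in> X \<and> \<phi> x = k}. F \<xi>) = Gf X \<phi> F k"
      unfolding Gf_def using assms
      by (simp add: sum.inter_filter[symmetric] if_distrib cong: if_cong)
    finally show "(\<Sum>\<xi>\<in>{x. x \<in> X \<and> \<phi> x = k}. F \<xi> * Gf X \<phi> F (\<phi> \<xi> + c)) = Gf X \<phi> F k * Gf X \<phi> F (k + c)" .
  qed
  finally show ?thesis .
qed

lemma shift_le: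
  fixes F :: "'a \<Rightarrow> real" and \<phi> :: "'a \<Rightarrow> int"
  assumes "finite X"
  shows "(\<Sum>\<xi>\<in>X. \<Sum>\<eta>\<in>X. F \<xi> * F \<eta> * (if \<phi> \<eta> = \<phi> \<xi> + c then 1 else 0))
       \<le> (\<Sum>\<xi>\<in>X. \<Sum>\<eta>\<in>X. F \<xi> * F \<eta> * (if \<phi> \<eta> = \<phi> \<xi> then 1 else 0))"
proof -
  let ?G = "Gf X \<phi> F" and ?K = "\<phi> ` X"
  have fK: "finite ?K" using assms by simp
  have "(\<Sum>k\<in>?K. ?G k * ?G (k + c)) \<le> (\<Sum>k\<in>?K. (?G k ^ 2 + ?G (k + c) ^ 2) / 2)"
    by (rule sum_mono) (rule amgm)
  also have "\<dots> = ((\<Sum>k\<in>?K. ?G k ^ 2) + (\<Sum>k\<in>?K. ?G (k + c) ^ 2)) / 2"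
    by (simp only: sum.distrib[symmetric] sum_divide_distrib)
  also have "(\<Sum>k\<in>?K. ?G (k + c) ^ 2) \<le> (\<Sum>k\<in>?K. ?G k ^ 2)"
  proof -
    have "(\<Sum>k\<in>?K. ?G (k + c) ^ 2) = (\<Sum>k\<in>(\<lambda>k. k + c) ` ?K. ?G k ^ 2)"
      by (subst sum.reindex) (auto simp: inj_on_def)
    also have "\<dots> = (\<Sum>k\<in>(\<lambda>k. k + c) ` ?K \<inter> ?K. ?G k ^ 2)"
      by (rule sum.mono_neutral_right) (use fK in \<open>auto simp: Gf_zero\<close>)
    also have "\<dots> \<le> (\<Sum>k\<in>?K. ?G k ^ 2)"
      by (rule sum_mono2) (use fK in auto)
    finally show ?thesis .
  qed
  hence "((\<Sum>k\<in>?K. ?G k ^ 2) + (\<Sum>k\<in>?K. ?G (k + c) ^ 2)) / 2 \<le> (\<Sum>k\<in>?K. ?G k ^ 2)"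
    by simp
  finally have "(\<Sum>k\<in>?K. ?G k * ?G (k + c)) \<le> (\<Sum>k\<in>?K. ?G k ^ 2)" .
  thus ?thesis using shift_sum[OF assms, of F \<phi> c] shift_sum[OF assms, of F \<phi> 0]
    by (simp add: power2_eq_square)
qed

lemma sum_sq_card:
  fixes a :: "'i \<Rightarrow> real"
  assumes "finite I"
  shows "(\<Sum>i\<in>I. a i)^2 \<le> real (card I) * (\<Sum>i\<in>I. (a i)^2)"
proof -
  have "(\<Sum>i\<in>I. a i)^2 = (\<Sum>i\<in>I. \<Sum>j\<in>I. a i * a j)"
    by (simp add: power2_eq_square sum_product)
  also have "\<dots> \<le> (\<Sum>i\<in>I. \<Sum>j\<in>I. ((a i)^2 + (a j)^2) / 2)"
    by (intro sum_mono) (rule amgm)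
  also have "\<dots> = real (card I) * (\<Sum>i\<in>I. (a i)^2)"
  proof -
    have "(\<Sum>i\<in>I. \<Sum>j\<in>I. ((a i)^2 + (a j)^2) / 2)
       = (\<Sum>i\<in>I. \<Sum>j\<in>I. (a i)^2 / 2) + (\<Sum>i\<in>I. \<Sum>j\<in>I. (a j)^2 / 2)"
      by (simp add: add_divide_distrib sum.distrib)
    also have "(\<Sum>i\<in>I. \<Sum>j\<in>I. (a i)^2 / 2) = real (card I) * (\<Sum>i\<in>I. (a i)^2) / 2"
      by (simp add: sum_distrib_left sum_divide_distrib mult.commute)
    also have "(\<Sum>i\<in>I. \<Sum>j\<in>I. (a j)^2 / 2) = real (card I) * (\<Sum>i\<in>I. (a i)^2) / 2"
      by (simp add: sum_divide_distrib[symmetric])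
    finally show ?thesis by simp
  qed
  finally show ?thesis .
qed

lemma psd_sum:
  fixes F :: "'i \<Rightarrow> 'a \<Rightarrow> real" and \<phi> :: "'a \<Rightarrow> int"
  assumes "finite X" "finite I"
  shows "(\<Sum>\<xi>\<in>X. \<Sum>\<eta>\<in>X. (\<Sum>i\<in>I. F i \<xi>) * (\<Sum>i\<in>I. F i \<eta>) * (if \<phi> \<eta> = \<phi> \<xi> then 1 else 0))
     \<le> real (card I) * (\<Sum>i\<in>I. \<Sum>\<xi>\<in>X. \<Sum>\<eta>\<in>X. F i \<xi> * F i \<eta> * (if \<phi> \<eta> = \<phi> \<xi> then 1 else 0))"
proof -
  have e: "\<And>H. (\<Sum>\<xi>\<in>X. \<Sum>\<eta>\<in>X. H \<xi> * H \<eta> * (if \<phi> \<eta> = \<phi> \<xi> then 1 else 0))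
        = (\<Sum>k\<in>\<phi> ` X. (Gf X \<phi> H k)^2)"
    using shift_sum[OF assms(1), of _ \<phi> 0] by (simp add: power2_eq_square)
  have lin: "Gf X \<phi> (\<lambda>\<xi>. \<Sum>i\<in>I. F i \<xi>) k = (\<Sum>i\<in>I. Gf X \<phi> (F i) k)" for k
    unfolding Gf_def by (simp add: sum_distrib_right sum.swap[of _ X])
  have "(\<Sum>k\<in>\<phi> ` X. (Gf X \<phi> (\<lambda>\<xi>. \<Sum>i\<in>I. F i \<xi>) k)^2)
      \<le> (\<Sum>k\<in>\<phi> ` X. real (card I) * (\<Sum>i\<in>I. (Gf X \<phi> (F i) k)^2))"
    unfolding lin by (intro sum_mono sum_sq_card assms)
  also have "\<dots> = real (card I) * (\<Sum>i\<in>I. \<Sum>k\<in>\<phi> ` X. (Gf X \<phi> (F i) k)^2)"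
    by (simp add: sum_distrib_left sum.swap[of _ "\<phi> ` X"])
  finally show ?thesis unfolding e .
qed



definition Rt :: "real \<Rightarrow> nat \<Rightarrow> (nat \<Rightarrow> pt2 set) \<Rightarrow> pt2 \<Rightarrow> (real \<times> real) set \<Rightarrow> (real \<times> real) set \<Rightarrow> nat \<Rightarrow> bool" where
  "Rt C m S p l1 l2 \<alpha> \<longleftrightarrow> (\<exists>j\<le>m. p \<in> S j \<and> cross_type C j (S j) l1 l2 \<alpha>)"

definition Lset :: "pt2 \<Rightarrow> real \<times> real \<Rightarrow> (real \<times> real) set" where
  "Lset p d = {rpt p + t *\<^sub>R d | t. True}"

definition perp :: "pt2 \<Rightarrow> pt2" where
  "perp u = (- snd u, fst u)"

definition Ty :: "real \<Rightarrow> nat \<Rightarrow> (nat \<Rightarrow> pt2 set) \<Rightarrow> pt2 \<Rightarrow> pt2 \<Rightarrow> nat" where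
  "Ty C m S u p = (if \<exists>\<alpha>\<in>{1,2,3}. Rt C m S p (Lset p (rpt u)) (Lset p (rpt (perp u))) \<alpha>
      then SOME \<alpha>. \<alpha> \<in> {1,2,3} \<and> Rt C m S p (Lset p (rpt u)) (Lset p (rpt (perp u))) \<alpha> else 1)"

lemma rpt_diff: "rpt (a - b) = rpt a - rpt b"
  by (simp add: rpt_def)

lemma line_through_Lset: "line_through p q = Lset p (rpt (q - p))"
  unfolding line_through_def Lset_def by (simp add: rpt_diff)

lemma Lset_scale:
  assumes "k \<noteq> 0"
  shows "Lset p (k *\<^sub>R d) = Lset p d"
proof
  show "Lset p (k *\<^sub>R d) \<subseteq> Lset p d"
    unfolding Lset_def by (auto simp: scaleR_scaleR)
  show "Lset p d \<subseteq> Lset p (k *\<^sub>R d)"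
  proof
    fix x assume "x \<in> Lset p d"
    then obtain t where "x = rpt p + t *\<^sub>R d" unfolding Lset_def by blast
    hence "x = rpt p + (t / k) *\<^sub>R (k *\<^sub>R d)" using assms by (simp add: scaleR_scaleR)
    thus "x \<in> Lset p (k *\<^sub>R d)" unfolding Lset_def by blast
  qed
qed

lemma Lset_mem: "rpt p \<in> Lset p d"
  unfolding Lset_def by (rule CollectI, rule exI[of _ 0]) simp

lemma cross_a_sym: "cross_a A l1 l2 = cross_a A l2 l1"
  unfolding cross_a_def by (simp add: max.commute)

lemma Rt_sym: "Rt C m S p l1 l2 \<alpha> = Rt C m S p l2 l1 \<alpha>"
  unfolding Rt_def cross_type_def by (simp add: cross_a_sym)

lemma Rt_exists:
  assumes "j \<le> m" "p \<in> S j" "finite (S j)" "rpt p \<in> l1"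
  shows "\<exists>\<alpha>\<in>{1,2,3}. Rt C m S p l1 l2 \<alpha>"
proof -
  let ?M = "max (lat_count l1 (S j)) (lat_count l2 (S j))"
  have ne: "p \<in> {\<xi> \<in> S j. rpt \<xi> \<in> l1}" using assms by simp
  have fin: "finite {\<xi> \<in> S j. rpt \<xi> \<in> l1}" using assms(3) by simp
  have "card {\<xi> \<in> S j. rpt \<xi> \<in> l1} > 0" using ne fin card_gt_0_iff by blast
  hence "lat_count l1 (S j) \<ge> 1" unfolding lat_count_def by simp
  hence M1: "?M \<ge> 1" by simp
  define a where "a = cross_a (S j) l1 l2"
  have a_def': "a = log 2 (real ?M)" unfolding a_def cross_a_def by simp
  have a0: "a \<ge> 0" unfolding a_def' using M1 by simp
  have ctR: "Rt C m S p l1 l2 \<alpha>" if "cross_type C j (S j) l1 l2 \<alpha>" for \<alpha>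
    unfolding Rt_def using assms(1,2) that by blast
  have ct: "cross_type C j (S j) l1 l2 \<alpha> \<longleftrightarrow>
     ((\<alpha> = 1 \<and> a \<ge> real j / 2 + C) \<or> (\<alpha> = 2 \<and> 1 \<le> a \<and> a < real j / 2 + C) \<or> (\<alpha> = 3 \<and> a = 0))" for \<alpha>
    unfolding cross_type_def Let_def a_def by (rule refl)
  consider "a \<ge> real j / 2 + C" | "1 \<le> a \<and> a < real j / 2 + C" | "a < 1" by linarith
  thus ?thesis
  proof cases
    case 1
    hence "Rt C m S p l1 l2 1" using ctR ct by blast
    thus ?thesis by blast
  next
    case 2
    hence "Rt C m S p l1 l2 2" using ctR ct by blast
    thus ?thesis by blast
  next
    case 3
    have "real ?M < 2"
    proof (rule ccontr)
      assume "\<not> real ?M < 2"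
      hence "log 2 2 \<le> log 2 (real ?M)" by (subst log_le_cancel_iff) auto
      thus False using 3 a_def' by simp
    qed
    hence "?M = 1" using M1 by linarith
    hence "a = 0" unfolding a_def' by simp
    hence "Rt C m S p l1 l2 3" using ctR ct by blast
    thus ?thesis by blast
  qed
qed

lemma Ty_in: "Ty C m S u p \<in> {1,2,3}"
proof (cases "\<exists>\<alpha>\<in>{1,2,3}. Rt C m S p (Lset p (rpt u)) (Lset p (rpt (perp u))) \<alpha>")
  case True
  hence "\<exists>\<alpha>. \<alpha> \<in> {1,2,3} \<and> Rt C m S p (Lset p (rpt u)) (Lset p (rpt (perp u))) \<alpha>" by blast
  from someI_ex[OF this] True show ?thesis unfolding Ty_def by simp
qed (simp add: Ty_def)

lemma Ty_Rt:
  assumes "\<forall>j\<le>m. finite (S j)" "p \<in> (\<Union>j\<le>m. S j)"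
  shows "Rt C m S p (Lset p (rpt u)) (Lset p (rpt (perp u))) (Ty C m S u p)"
proof -
  obtain j where j: "j \<le> m" "p \<in> S j" using assms(2) by blast
  have ex: "\<exists>\<alpha>\<in>{1,2,3}. Rt C m S p (Lset p (rpt u)) (Lset p (rpt (perp u))) \<alpha>"
    by (rule Rt_exists[where j=j and m=m and S=S and p=p]) (use assms j in \<open>auto simp: Lset_mem\<close>)
  hence "\<exists>\<alpha>. \<alpha> \<in> {1,2,3} \<and> Rt C m S p (Lset p (rpt u)) (Lset p (rpt (perp u))) \<alpha>" by blast
  from someI_ex[OF this] ex show ?thesis unfolding Ty_def by simp
qed

lemma perp_par:
  assumes "u \<noteq> 0" "h \<noteq> 0" "dot2 u h = 0"
  shows "Lset p (rpt h) = Lset p (rpt (perp u))"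
proof -
  obtain u1 u2 where u: "u = (u1, u2)" by fastforce
  obtain h1 h2 where h: "h = (h1, h2)" by fastforce
  have e: "u1 * h1 + u2 * h2 = 0" using assms(3) u h by (simp add: dot2_def)
  show ?thesis
  proof (cases "u1 = 0")
    case True
    hence u2: "u2 \<noteq> 0" using assms(1) u by (simp add: zero_prod_def)
    hence h2: "h2 = 0" using e True by simp
    hence h1: "h1 \<noteq> 0" using assms(2) h by (simp add: zero_prod_def)
    have eq: "rpt h = (- real_of_int h1 / real_of_int u2) *\<^sub>R rpt (perp u)"
      using True u2 h2 u h by (simp add: rpt_def perp_def)
    have "- real_of_int h1 / real_of_int u2 \<noteq> 0" using h1 u2 by simp
    thus ?thesis unfolding eq by (rule Lset_scale)
  next
    case False
    have e': "real_of_int u1 * real_of_int h1 = - (real_of_int u2 * real_of_int h2)"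
    proof -
      have "u1 * h1 = - (u2 * h2)" using e by linarith
      hence "real_of_int (u1 * h1) = real_of_int (- (u2 * h2))" by simp
      thus ?thesis by simp
    qed
    have eq: "rpt h = (real_of_int h2 / real_of_int u1) *\<^sub>R rpt (perp u)"
      using False u h e' by (simp add: rpt_def perp_def field_simps)
    have "h2 \<noteq> 0"
    proof
      assume "h2 = 0"
      hence "h1 = 0" using e False by simp
      thus False using \<open>h2 = 0\<close> assms(2) h by (simp add: zero_prod_def)
    qed
    hence "real_of_int h2 / real_of_int u1 \<noteq> 0" using False by simp
    thus ?thesis unfolding eq by (rule Lset_scale)
  qed
qed

lemma Lset_U:
  assumes "d = u \<or> d = - u"
  shows "Lset p (rpt d) = Lset p (rpt u)"
  using assms
proof
  assume "d = - u"
  hence eq: "rpt d = (-1) *\<^sub>R rpt u" by (simp add: rpt_def)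
  show ?thesis unfolding eq by (rule Lset_scale) simp
qed simp

lemma VT:
  assumes fin: "\<forall>j\<le>m. finite (S j)" and pU: "p \<in> (\<Union>j\<le>m. S j)" and u0: "u \<noteq> 0"
    and dx: "x - p = u \<or> x - p = - u" and dy: "y - p \<noteq> 0" "dot2 u (y - p) = 0"
  shows "vertex_type C m S x p y (Ty C m S u p)" "vertex_type C m S y p x (Ty C m S u p)"
proof -
  have lx: "line_through p x = Lset p (rpt u)"
    unfolding line_through_Lset using dx by (rule Lset_U)
  have ly: "line_through p y = Lset p (rpt (perp u))"
    unfolding line_through_Lset using perp_par[OF u0 dy] .
  have R: "Rt C m S p (Lset p (rpt u)) (Lset p (rpt (perp u))) (Ty C m S u p)"
    by (rule Ty_Rt[OF fin pU])
  show "vertex_type C m S x p y (Ty C m S u p)"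
    using R unfolding vertex_type_def lx ly Rt_def .
  show "vertex_type C m S y p x (Ty C m S u p)"
    using R unfolding vertex_type_def lx ly Rt_sym[of C m S p "Lset p (rpt u)"] unfolding Rt_def .
qed



lemma dot2_diff: "dot2 u (a - b) = dot2 u a - dot2 u b"
  by (simp add: dot2_def algebra_simps)

lemma dot2_add: "dot2 u (a + b) = dot2 u a + dot2 u b"
  by (simp add: dot2_def algebra_simps)

lemma gcd2_dvd_dot: "gcd2 u dvd dot2 u v"
  unfolding gcd2_def dot2_def by (intro dvd_add dvd_mult2) auto

lemma gcd2_neg: "gcd2 (- u) = gcd2 u"
  unfolding gcd2_def by simp

lemma dot2_self_pos:
  assumes "u \<noteq> 0" shows "dot2 u u > 0"
proof -
  obtain a b where u: "u = (a, b)" by fastforce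
  have "a \<noteq> 0 \<or> b \<noteq> 0" using assms u by (auto simp: zero_prod_def)
  hence "a^2 + b^2 > 0" by (simp add: sum_power2_gt_zero_iff)
  thus ?thesis using u by (simp add: dot2_def power2_eq_square)
qed

lemma fQ_nonneg: "(\<And>x. f x \<ge> 0) \<Longrightarrow> fQ f Q \<ge> 0"
  by (cases Q) (auto simp: fQ_def)

lemma Q0_sub: "Q0_ab C m S \<alpha> \<beta> \<subseteq> quads_in (\<Union>j\<le>m. S j)"
  unfolding Q0_ab_def quads_in_def by auto

lemma Q0_abI:
  assumes "is_parallelogram (\<xi>1, \<xi>2, \<xi>3, \<xi>4)" "tauQ (\<xi>1, \<xi>2, \<xi>3, \<xi>4) = 0"
    "distinct [\<xi>1, \<xi>2, \<xi>3, \<xi>4]"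
    "\<xi>1 \<in> (\<Union>j\<le>m. S j)" "\<xi>2 \<in> (\<Union>j\<le>m. S j)" "\<xi>3 \<in> (\<Union>j\<le>m. S j)" "\<xi>4 \<in> (\<Union>j\<le>m. S j)"
    "vertex_type C m S \<xi>4 \<xi>1 \<xi>2 \<alpha>" "vertex_type C m S \<xi>1 \<xi>2 \<xi>3 \<alpha>"
    "vertex_type C m S \<xi>2 \<xi>3 \<xi>4 \<beta>" "vertex_type C m S \<xi>3 \<xi>4 \<xi>1 \<beta>"
  shows "(\<xi>1, \<xi>2, \<xi>3, \<xi>4) \<in> Q0_ab C m S \<alpha> \<beta>"
  unfolding Q0_ab_def using assms by blast



lemma main_bound:
  fixes C :: real and m :: nat and S :: "nat \<Rightarrow> pt2 set" and lam :: "nat \<Rightarrow> real" and \<tau> :: int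
  assumes fin: "\<forall>j\<le>m. finite (S j)" and lam0: "\<forall>j\<le>m. lam j \<ge> 0"
  defines "U \<equiv> (\<Union>j\<le>m. S j)" and "f \<equiv> fS m S lam"
  shows "(\<Sum>Q\<in>{Q\<in>quads_in U. is_parallelogram Q \<and> tauQ Q = \<tau>}. fQ f Q)
       \<le> 200 * (Max {(\<Sum>Q\<in>{Q\<in>Q0_ab C m S \<alpha> \<beta>. gcd2 (fst Q - snd (snd (snd Q))) dvd \<tau>}. fQ f Q)
                   | \<alpha> \<beta>. \<alpha> \<in> {1,2,3::nat} \<and> \<beta> \<in> {1,2,3::nat}}
                + (\<Sum>\<xi>\<in>U. (f \<xi>)\<^sup>2)\<^sup>2)"
proof -
  have finU: "finite U" unfolding U_def using fin by auto
  have f0: "f x \<ge> 0" for x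
    unfolding f_def fS_def using lam0 by (intro sum_nonneg) auto
  have fout: "f x = 0" if "x \<notin> U" for x
    unfolding f_def fS_def using that U_def by (intro sum.neutral) auto
  have fin_U: "f x \<noteq> 0 \<Longrightarrow> x \<in> U" for x using fout by blast
  define F where "F u \<xi> = f \<xi> * f (\<xi> + u)" for u \<xi>
  have F0: "F u \<xi> \<ge> 0" for u \<xi> unfolding F_def using f0 by simp
  define I where "I = {1,2,3::nat} \<times> {1,2,3::nat}"
  have finI: "finite I" and cardI: "card I = 9" unfolding I_def by auto
  define Fab where "Fab u i \<xi> = F u \<xi> * (if Ty C m S u \<xi> = fst i \<and> Ty C m S u (\<xi> + u) = snd i then 1 else 0)"
    for u \<xi> and i :: "nat \<times> nat"
  have Fab0: "0 \<le> Fab u i \<xi>" and FabF: "Fab u i \<xi> \<le> F u \<xi>" for u i \<xi>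
    unfolding Fab_def using F0[of u \<xi>] by auto
  have Fsum: "F u \<xi> = (\<Sum>i\<in>I. Fab u i \<xi>)" for u \<xi>
  proof -
    have "(\<Sum>i\<in>I. (if Ty C m S u \<xi> = fst i \<and> Ty C m S u (\<xi> + u) = snd i then 1 else 0))
        = (\<Sum>i\<in>I. (if i = (Ty C m S u \<xi>, Ty C m S u (\<xi> + u)) then 1 else (0::real)))"
      by (intro sum.cong) auto
    also have "\<dots> = 1"
    proof -
      have "(Ty C m S u \<xi>, Ty C m S u (\<xi> + u)) \<in> I"
        unfolding I_def using Ty_in[of C m S u \<xi>] Ty_in[of C m S u "\<xi> + u"] by blast
      thus ?thesis using finI by simp
    qed
    finally show ?thesis unfolding Fab_def by (simp add: sum_distrib_left[symmetric])
  qed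
  define N where "N = (\<Sum>\<xi>\<in>U. (f \<xi>)\<^sup>2)\<^sup>2"
  have N0: "N \<ge> 0" unfolding N_def by simp
  define Mab where "Mab i = (\<Sum>Q\<in>{Q\<in>Q0_ab C m S (fst i) (snd i). gcd2 (fst Q - snd (snd (snd Q))) dvd \<tau>}. fQ f Q)" for i :: "nat \<times> nat"
  define MS where "MS = {(\<Sum>Q\<in>{Q\<in>Q0_ab C m S \<alpha> \<beta>. gcd2 (fst Q - snd (snd (snd Q))) dvd \<tau>}. fQ f Q)
                   | \<alpha> \<beta>. \<alpha> \<in> {1,2,3::nat} \<and> \<beta> \<in> {1,2,3::nat}}"
  have MS_eq: "MS = Mab ` I" unfolding MS_def Mab_def I_def by force
  define M where "M = Max MS"
  have MabM: "Mab i \<le> M" if "i \<in> I" for i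
    unfolding M_def MS_eq using that finI by (intro Max_ge) auto
  have Mab0: "Mab i \<ge> 0" for i
    unfolding Mab_def by (intro sum_nonneg fQ_nonneg f0)
  have M0: "M \<ge> 0" using MabM[of "(1,1)"] Mab0[of "(1,1)"] by (simp add: I_def)
  define D where "D = (\<lambda>(a, b). b - a) ` (U \<times> U)"
  have finD: "finite D" unfolding D_def using finU by simp
  define inner where "inner u = (\<Sum>\<xi>\<in>U. \<Sum>\<eta>\<in>U. F u \<xi> * F u \<eta> * (if 2 * \<bar>dot2 u (\<eta> - \<xi>)\<bar> = \<tau> then 1 else 0))" for u
  define B where "B u = (\<Sum>\<xi>\<in>U. \<Sum>\<eta>\<in>U. F u \<xi> * F u \<eta> * (if dot2 u \<eta> = dot2 u \<xi> then 1 else 0))" for u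
  have B0: "B u \<ge> 0" for u unfolding B_def using F0 by (intro sum_nonneg) auto

  have stepA: "(\<Sum>Q\<in>{Q\<in>quads_in U. is_parallelogram Q \<and> tauQ Q = \<tau>}. fQ f Q) \<le> (\<Sum>u\<in>D. inner u)"
  proof -
    have "(\<Sum>Q\<in>{Q\<in>quads_in U. is_parallelogram Q \<and> tauQ Q = \<tau>}. fQ f Q)
        \<le> (\<Sum>(u, \<xi>, \<eta>)\<in>D \<times> U \<times> U. F u \<xi> * F u \<eta> * (if 2 * \<bar>dot2 u (\<eta> - \<xi>)\<bar> = \<tau> then 1 else 0))"
    proof (rule sum_le_included[where i = "\<lambda>(u, \<xi>, \<eta>). (\<xi>, \<xi> + u, \<eta> + u, \<eta>)"])
      show "finite {Q\<in>quads_in U. is_parallelogram Q \<and> tauQ Q = \<tau>}"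
        using finU unfolding quads_in_def by simp
      show "finite (D \<times> U \<times> U)" using finD finU by simp
      show "\<forall>y\<in>D \<times> U \<times> U. 0 \<le> (case y of (u, \<xi>, \<eta>) \<Rightarrow> F u \<xi> * F u \<eta> * (if 2 * \<bar>dot2 u (\<eta> - \<xi>)\<bar> = \<tau> then 1 else 0))"
        using F0 by auto
      show "\<forall>Q\<in>{Q\<in>quads_in U. is_parallelogram Q \<and> tauQ Q = \<tau>}. \<exists>y\<in>D \<times> U \<times> U.
              (case y of (u, \<xi>, \<eta>) \<Rightarrow> (\<xi>, \<xi> + u, \<eta> + u, \<eta>)) = Q \<and>
              fQ f Q \<le> (case y of (u, \<xi>, \<eta>) \<Rightarrow> F u \<xi> * F u \<eta> * (if 2 * \<bar>dot2 u (\<eta> - \<xi>)\<bar> = \<tau> then 1 else 0))"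
      proof
        fix Q assume Q: "Q \<in> {Q\<in>quads_in U. is_parallelogram Q \<and> tauQ Q = \<tau>}"
        obtain a b c d where Qe: "Q = (a, b, c, d)" by (cases Q) auto
        have inU: "a \<in> U" "b \<in> U" "c \<in> U" "d \<in> U" using Q Qe by (auto simp: quads_in_def)
        have par: "a + c = b + d" using Q Qe by (simp add: is_parallelogram_def)
        have tau: "2 * \<bar>dot2 (a - b) (a - d)\<bar> = \<tau>" using Q Qe by (simp add: tauQ_def)
        have ce: "c = d + (b - a)" using par by (simp add: algebra_simps)
        have dd: "dot2 (b - a) (d - a) = dot2 (a - b) (a - d)" by (simp add: dot2_def algebra_simps)
        show "\<exists>y\<in>D \<times> U \<times> U.
              (case y of (u, \<xi>, \<eta>) \<Rightarrow> (\<xi>, \<xi> + u, \<eta> + u, \<eta>)) = Q \<and>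
              fQ f Q \<le> (case y of (u, \<xi>, \<eta>) \<Rightarrow> F u \<xi> * F u \<eta> * (if 2 * \<bar>dot2 u (\<eta> - \<xi>)\<bar> = \<tau> then 1 else 0))"
        proof (rule bexI[of _ "(b - a, a, d)"])
          show "(b - a, a, d) \<in> D \<times> U \<times> U" using inU unfolding D_def by force
          show "(case (b - a, a, d) of (u, \<xi>, \<eta>) \<Rightarrow> (\<xi>, \<xi> + u, \<eta> + u, \<eta>)) = Q \<and>
              fQ f Q \<le> (case (b - a, a, d) of (u, \<xi>, \<eta>) \<Rightarrow> F u \<xi> * F u \<eta> * (if 2 * \<bar>dot2 u (\<eta> - \<xi>)\<bar> = \<tau> then 1 else 0))"
            using Qe ce tau dd by (simp add: fQ_def F_def mult_ac)
        qed
      qed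
    qed
    also have "\<dots> = (\<Sum>u\<in>D. inner u)"
      unfolding inner_def by (simp add: sum.cartesian_product)
    finally show ?thesis .
  qed

  have stepB: "inner u \<le> (if gcd2 u dvd \<tau> then 2 * B u else 0)" for u
  proof (cases "gcd2 u dvd \<tau>")
    case False
    have "inner u = 0" unfolding inner_def
    proof (intro sum.neutral ballI)
      fix \<xi> \<eta>
      have "\<not> 2 * \<bar>dot2 u (\<eta> - \<xi>)\<bar> = \<tau>"
      proof
        assume h: "2 * \<bar>dot2 u (\<eta> - \<xi>)\<bar> = \<tau>"
        have "gcd2 u dvd 2 * \<bar>dot2 u (\<eta> - \<xi>)\<bar>" using gcd2_dvd_dot[of u "\<eta> - \<xi>"] by simp
        thus False using h False by simp
      qed
      thus "F u \<xi> * F u \<eta> * (if 2 * \<bar>dot2 u (\<eta> - \<xi>)\<bar> = \<tau> then 1 else 0) = 0" by simp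
    qed
    thus ?thesis using False by simp
  next
    case True
    define \<phi> where "\<phi> x = 2 * dot2 u x" for x
    have "inner u \<le> (\<Sum>\<xi>\<in>U. \<Sum>\<eta>\<in>U. F u \<xi> * F u \<eta> * (if \<phi> \<eta> = \<phi> \<xi> + \<tau> then 1 else 0)
                              + F u \<xi> * F u \<eta> * (if \<phi> \<eta> = \<phi> \<xi> + - \<tau> then 1 else 0))"
      unfolding inner_def
    proof (intro sum_mono)
      fix \<xi> \<eta>
      have FF: "F u \<xi> * F u \<eta> \<ge> 0" using F0 by simp
      have e: "\<phi> \<eta> - \<phi> \<xi> = 2 * dot2 u (\<eta> - \<xi>)" unfolding \<phi>_def by (simp add: dot2_diff algebra_simps)
      show "F u \<xi> * F u \<eta> * (if 2 * \<bar>dot2 u (\<eta> - \<xi>)\<bar> = \<tau> then 1 else 0)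
         \<le> F u \<xi> * F u \<eta> * (if \<phi> \<eta> = \<phi> \<xi> + \<tau> then 1 else 0) + F u \<xi> * F u \<eta> * (if \<phi> \<eta> = \<phi> \<xi> + - \<tau> then 1 else 0)"
        using FF e by (cases "dot2 u (\<eta> - \<xi>) \<ge> 0") auto
    qed
    also have "\<dots> = (\<Sum>\<xi>\<in>U. \<Sum>\<eta>\<in>U. F u \<xi> * F u \<eta> * (if \<phi> \<eta> = \<phi> \<xi> + \<tau> then 1 else 0))
                 + (\<Sum>\<xi>\<in>U. \<Sum>\<eta>\<in>U. F u \<xi> * F u \<eta> * (if \<phi> \<eta> = \<phi> \<xi> + - \<tau> then 1 else 0))"
      by (simp add: sum.distrib)
    also have "\<dots> \<le> 2 * (\<Sum>\<xi>\<in>U. \<Sum>\<eta>\<in>U. F u \<xi> * F u \<eta> * (if \<phi> \<eta> = \<phi> \<xi> then 1 else 0))"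
      using shift_le[OF finU, of "F u" \<phi> \<tau>] shift_le[OF finU, of "F u" \<phi> "- \<tau>"] by simp
    also have "(\<Sum>\<xi>\<in>U. \<Sum>\<eta>\<in>U. F u \<xi> * F u \<eta> * (if \<phi> \<eta> = \<phi> \<xi> then 1 else 0)) = B u"
      unfolding B_def \<phi>_def by simp
    finally show ?thesis using True by simp
  qed

  have Bz: "B 0 = N"
    unfolding B_def N_def F_def by (simp add: dot2_def power2_eq_square sum_product mult_ac)

  define Off where "Off u i = (\<Sum>\<xi>\<in>U. \<Sum>\<eta>\<in>U. Fab u i \<xi> * Fab u i \<eta> * (if dot2 u \<eta> = dot2 u \<xi> \<and> \<eta> \<noteq> \<xi> then 1 else 0))" for u i
  define Dg where "Dg u = (\<Sum>\<xi>\<in>U. (F u \<xi>)\<^sup>2)" for u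
  have Off0: "Off u i \<ge> 0" for u i unfolding Off_def using Fab0 by (intro sum_nonneg) auto
  have Dg0: "Dg u \<ge> 0" for u unfolding Dg_def by (intro sum_nonneg) auto

  have stepC: "B u \<le> 9 * (\<Sum>i\<in>I. Off u i + Dg u)" for u
  proof -
    have "B u = (\<Sum>\<xi>\<in>U. \<Sum>\<eta>\<in>U. (\<Sum>i\<in>I. Fab u i \<xi>) * (\<Sum>i\<in>I. Fab u i \<eta>) * (if dot2 u \<eta> = dot2 u \<xi> then 1 else 0))"
      unfolding B_def Fsum[symmetric] ..
    also have "\<dots> \<le> real (card I) * (\<Sum>i\<in>I. \<Sum>\<xi>\<in>U. \<Sum>\<eta>\<in>U. Fab u i \<xi> * Fab u i \<eta> * (if dot2 u \<eta> = dot2 u \<xi> then 1 else 0))"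
      by (rule psd_sum[OF finU finI])
    also have "\<dots> \<le> 9 * (\<Sum>i\<in>I. Off u i + Dg u)"
      unfolding cardI of_nat_numeral
    proof (intro mult_left_mono sum_mono)
      fix i assume "i \<in> I"
      have "(\<Sum>\<xi>\<in>U. \<Sum>\<eta>\<in>U. Fab u i \<xi> * Fab u i \<eta> * (if dot2 u \<eta> = dot2 u \<xi> then 1 else 0))
         \<le> (\<Sum>\<xi>\<in>U. \<Sum>\<eta>\<in>U. Fab u i \<xi> * Fab u i \<eta> * (if dot2 u \<eta> = dot2 u \<xi> \<and> \<eta> \<noteq> \<xi> then 1 else 0)
               + (if \<eta> = \<xi> then F u \<xi> * F u \<eta> else 0))"
      proof (intro sum_mono)
        fix \<xi> \<eta>
        have "Fab u i \<xi> * Fab u i \<eta> \<le> F u \<xi> * F u \<eta>"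
          using Fab0 FabF F0 by (intro mult_mono) auto
        thus "Fab u i \<xi> * Fab u i \<eta> * (if dot2 u \<eta> = dot2 u \<xi> then 1 else 0)
          \<le> Fab u i \<xi> * Fab u i \<eta> * (if dot2 u \<eta> = dot2 u \<xi> \<and> \<eta> \<noteq> \<xi> then 1 else 0) + (if \<eta> = \<xi> then F u \<xi> * F u \<eta> else 0)"
          using Fab0[of u i \<xi>] Fab0[of u i \<eta>] by auto
      qed
      also have "\<dots> = Off u i + Dg u"
        unfolding Off_def Dg_def using finU by (simp add: sum.distrib power2_eq_square)
      finally show "(\<Sum>\<xi>\<in>U. \<Sum>\<eta>\<in>U. Fab u i \<xi> * Fab u i \<eta> * (if dot2 u \<eta> = dot2 u \<xi> then 1 else 0)) \<le> Off u i + Dg u" .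
    qed simp
    finally show ?thesis .
  qed

  define Dz where "Dz = {u\<in>D. u \<noteq> 0 \<and> gcd2 u dvd \<tau>}"
  have finDz: "finite Dz" unfolding Dz_def using finD by simp

  have stepE: "(\<Sum>u\<in>Dz. Off u i) \<le> Mab i" if iI: "i \<in> I" for i
  proof -
    obtain \<alpha> \<beta> where i: "i = (\<alpha>, \<beta>)" by fastforce
    define G where "G = (\<lambda>(u, \<xi>, \<eta>). Fab u i \<xi> * Fab u i \<eta> * (if dot2 u \<eta> = dot2 u \<xi> \<and> \<eta> \<noteq> \<xi> then 1 else (0::real)))"
    have "(\<Sum>u\<in>Dz. Off u i) = (\<Sum>x\<in>Dz \<times> U \<times> U. G x)"
      unfolding Off_def G_def by (simp add: sum.cartesian_product)
    also have "\<dots> = (\<Sum>x\<in>{x\<in>Dz \<times> U \<times> U. G x \<noteq> 0}. G x)"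
      by (rule sum.mono_neutral_right) (use finDz finU in auto)
    also have "\<dots> \<le> Mab i"
      unfolding Mab_def
    proof (rule sum_le_included[where i = "\<lambda>Q. (snd (snd (snd Q)) - fst Q, fst Q, fst (snd Q))"])
      show "finite {x\<in>Dz \<times> U \<times> U. G x \<noteq> 0}"
        by (rule finite_subset[of _ "Dz \<times> U \<times> U"]) (use finDz finU in auto)
      show "finite {Q\<in>Q0_ab C m S (fst i) (snd i). gcd2 (fst Q - snd (snd (snd Q))) dvd \<tau>}"
      proof (rule finite_subset)
        show "{Q\<in>Q0_ab C m S (fst i) (snd i). gcd2 (fst Q - snd (snd (snd Q))) dvd \<tau>} \<subseteq> quads_in U"
          using Q0_sub[of C m S "fst i" "snd i"] unfolding U_def by blast
        show "finite (quads_in U)" using finU by (simp add: quads_in_def)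
      qed
      show "\<forall>y\<in>{Q\<in>Q0_ab C m S (fst i) (snd i). gcd2 (fst Q - snd (snd (snd Q))) dvd \<tau>}. 0 \<le> fQ f y"
        using fQ_nonneg f0 by blast
      show "\<forall>x\<in>{x\<in>Dz \<times> U \<times> U. G x \<noteq> 0}. \<exists>y\<in>{Q\<in>Q0_ab C m S (fst i) (snd i). gcd2 (fst Q - snd (snd (snd Q))) dvd \<tau>}.
               (snd (snd (snd y)) - fst y, fst y, fst (snd y)) = x \<and> G x \<le> fQ f y"
      proof
        fix x assume x: "x \<in> {x\<in>Dz \<times> U \<times> U. G x \<noteq> 0}"
        obtain u \<xi> \<eta> where xe: "x = (u, \<xi>, \<eta>)" by (cases x) auto
        have uDz: "u \<in> Dz" and Gne: "G (u, \<xi>, \<eta>) \<noteq> 0" using x xe by auto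
        have u0: "u \<noteq> 0" and gd: "gcd2 u dvd \<tau>" using uDz unfolding Dz_def by auto
        have a1: "Fab u i \<xi> \<noteq> 0" "Fab u i \<eta> \<noteq> 0" and dq: "dot2 u \<eta> = dot2 u \<xi>" and ne: "\<eta> \<noteq> \<xi>"
          using Gne unfolding G_def by (auto split: if_splits)
        have t1: "f \<xi> \<noteq> 0" "f (\<xi> + u) \<noteq> 0" "Ty C m S u \<xi> = \<alpha>" "Ty C m S u (\<xi> + u) = \<beta>"
          using a1(1) unfolding Fab_def F_def i by (auto split: if_splits)
        have t2: "f \<eta> \<noteq> 0" "f (\<eta> + u) \<noteq> 0" "Ty C m S u \<eta> = \<alpha>" "Ty C m S u (\<eta> + u) = \<beta>"
          using a1(2) unfolding Fab_def F_def i by (auto split: if_splits)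
        have inU: "\<xi> \<in> (\<Union>j\<le>m. S j)" "\<xi> + u \<in> (\<Union>j\<le>m. S j)" "\<eta> \<in> (\<Union>j\<le>m. S j)" "\<eta> + u \<in> (\<Union>j\<le>m. S j)"
          using fin_U t1 t2 unfolding U_def by auto
        have n1: "\<xi> \<noteq> \<eta> + u"
        proof
          assume "\<xi> = \<eta> + u"
          hence "dot2 u \<xi> = dot2 u \<eta> + dot2 u u" by (simp add: dot2_add)
          thus False using dq dot2_self_pos[OF u0] by simp
        qed
        have n2: "\<eta> \<noteq> \<xi> + u"
        proof
          assume "\<eta> = \<xi> + u"
          hence "dot2 u \<eta> = dot2 u \<xi> + dot2 u u" by (simp add: dot2_add)
          thus False using dq dot2_self_pos[OF u0] by simp
        qed
        have d1: "\<eta> - \<xi> \<noteq> 0" "dot2 u (\<eta> - \<xi>) = 0" using ne dq by (auto simp: dot2_diff)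
        have d2: "\<xi> - \<eta> \<noteq> 0" "dot2 u (\<xi> - \<eta>) = 0" using ne dq by (auto simp: dot2_diff)
        have d3: "(\<xi> + u) - (\<eta> + u) \<noteq> 0" "dot2 u ((\<xi> + u) - (\<eta> + u)) = 0" using ne dq by (auto simp: dot2_diff)
        have d4: "(\<eta> + u) - (\<xi> + u) \<noteq> 0" "dot2 u ((\<eta> + u) - (\<xi> + u)) = 0" using ne dq by (auto simp: dot2_diff)
        have v1: "vertex_type C m S (\<xi> + u) \<xi> \<eta> \<alpha>"
          using VT(1)[where C=C and x="\<xi> + u", OF fin inU(1) u0 _ d1] t1 by simp
        have v2: "vertex_type C m S \<xi> \<eta> (\<eta> + u) \<alpha>"
          using VT(2)[where C=C and x="\<eta> + u", OF fin inU(3) u0 _ d2] t2 by simp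
        have v3: "vertex_type C m S \<eta> (\<eta> + u) (\<xi> + u) \<beta>"
          using VT(1)[where C=C and x="\<eta>", OF fin inU(4) u0 _ d3] t2 by simp
        have v4: "vertex_type C m S (\<eta> + u) (\<xi> + u) \<xi> \<beta>"
          using VT(2)[where C=C and x="\<xi>", OF fin inU(2) u0 _ d4] t1 by simp
        have tz: "dot2 (\<xi> - \<eta>) (\<xi> - (\<xi> + u)) = dot2 u \<eta> - dot2 u \<xi>"
          by (simp add: dot2_def algebra_simps)
        define Q where "Q = (\<xi>, \<eta>, \<eta> + u, \<xi> + u)"
        have QQ: "Q \<in> Q0_ab C m S \<alpha> \<beta>" unfolding Q_def
        proof (rule Q0_abI)
          show "is_parallelogram (\<xi>, \<eta>, \<eta> + u, \<xi> + u)" by (simp add: is_parallelogram_def algebra_simps)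
          show "tauQ (\<xi>, \<eta>, \<eta> + u, \<xi> + u) = 0" using tz dq by (simp add: tauQ_def)
          show "distinct [\<xi>, \<eta>, \<eta> + u, \<xi> + u]" using ne n1 n2 u0 by auto
        qed (use inU v1 v2 v3 v4 in auto)
        have gQ: "gcd2 (fst Q - snd (snd (snd Q))) dvd \<tau>"
        proof -
          have "fst Q - snd (snd (snd Q)) = - u" unfolding Q_def by simp
          thus ?thesis using gd gcd2_neg by simp
        qed
        show "\<exists>y\<in>{Q\<in>Q0_ab C m S (fst i) (snd i). gcd2 (fst Q - snd (snd (snd Q))) dvd \<tau>}.
               (snd (snd (snd y)) - fst y, fst y, fst (snd y)) = x \<and> G x \<le> fQ f y"
        proof (rule bexI[of _ Q])
          show "Q \<in> {Q\<in>Q0_ab C m S (fst i) (snd i). gcd2 (fst Q - snd (snd (snd Q))) dvd \<tau>}"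
            using QQ gQ i by simp
          show "(snd (snd (snd Q)) - fst Q, fst Q, fst (snd Q)) = x \<and> G x \<le> fQ f Q"
            using xe t1 t2 dq ne unfolding Q_def G_def Fab_def F_def fQ_def i by (simp add: mult_ac)
        qed
      qed
    qed
    finally show ?thesis .
  qed

  have stepF: "(\<Sum>u\<in>D. Dg u) \<le> N"
  proof -
    define G where "G = (\<lambda>(u::pt2, \<xi>::pt2). (F u \<xi>)\<^sup>2)"
    have "(\<Sum>u\<in>D. Dg u) = (\<Sum>x\<in>D \<times> U. G x)"
      unfolding Dg_def G_def by (simp add: sum.cartesian_product)
    also have "\<dots> = (\<Sum>x\<in>{x\<in>D \<times> U. G x \<noteq> 0}. G x)"
      by (rule sum.mono_neutral_right) (use finD finU in auto)
    also have "\<dots> \<le> (\<Sum>y\<in>U \<times> U. (f (fst y))\<^sup>2 * (f (snd y))\<^sup>2)"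
    proof (rule sum_le_included[where i = "\<lambda>y. (snd y - fst y, fst y)"])
      show "finite {x\<in>D \<times> U. G x \<noteq> 0}"
        by (rule finite_subset[of _ "D \<times> U"]) (use finD finU in auto)
      show "finite (U \<times> U)" using finU by simp
      show "\<forall>y\<in>U \<times> U. 0 \<le> (f (fst y))\<^sup>2 * (f (snd y))\<^sup>2" by simp
      show "\<forall>x\<in>{x\<in>D \<times> U. G x \<noteq> 0}. \<exists>y\<in>U \<times> U. (snd y - fst y, fst y) = x \<and> G x \<le> (f (fst y))\<^sup>2 * (f (snd y))\<^sup>2"
      proof
        fix x assume x: "x \<in> {x\<in>D \<times> U. G x \<noteq> 0}"
        obtain u \<xi> where xe: "x = (u, \<xi>)" by (cases x) auto
        have "G (u, \<xi>) \<noteq> 0" "\<xi> \<in> U" using x xe by auto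
        hence "f (\<xi> + u) \<noteq> 0" unfolding G_def F_def by auto
        hence "\<xi> + u \<in> U" using fin_U by blast
        show "\<exists>y\<in>U \<times> U. (snd y - fst y, fst y) = x \<and> G x \<le> (f (fst y))\<^sup>2 * (f (snd y))\<^sup>2"
          by (rule bexI[of _ "(\<xi>, \<xi> + u)"])
             (use xe \<open>\<xi> \<in> U\<close> \<open>\<xi> + u \<in> U\<close> in \<open>auto simp: G_def F_def power_mult_distrib\<close>)
      qed
    qed
    also have "\<dots> = N"
      unfolding N_def power2_eq_square[of "sum _ _"] sum_product
      by (simp add: sum.cartesian_product case_prod_beta)
    finally show ?thesis .
  qed

  have "(\<Sum>Q\<in>{Q\<in>quads_in U. is_parallelogram Q \<and> tauQ Q = \<tau>}. fQ f Q) \<le> (\<Sum>u\<in>D. inner u)"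
    by (rule stepA)
  also have "\<dots> \<le> (\<Sum>u\<in>D. (if u = 0 then 2 * N else 0) + (if u \<noteq> 0 \<and> gcd2 u dvd \<tau> then 18 * (\<Sum>i\<in>I. Off u i + Dg u) else 0))"
  proof (intro sum_mono)
    fix u
    show "inner u \<le> (if u = 0 then 2 * N else 0) + (if u \<noteq> 0 \<and> gcd2 u dvd \<tau> then 18 * (\<Sum>i\<in>I. Off u i + Dg u) else 0)"
      using stepB[of u] stepC[of u] Bz B0[of u] by (auto split: if_splits)
  qed
  also have "\<dots> = (\<Sum>u\<in>D. (if u = 0 then 2 * N else 0)) + 18 * (\<Sum>u\<in>Dz. \<Sum>i\<in>I. Off u i + Dg u)"
  proof -
    have e1: "(\<Sum>u\<in>Dz. 18 * (\<Sum>i\<in>I. Off u i + Dg u)) = (\<Sum>u\<in>D. if u \<noteq> 0 \<and> gcd2 u dvd \<tau> then 18 * (\<Sum>i\<in>I. Off u i + Dg u) else 0)"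
      unfolding Dz_def by (rule sum.inter_filter[OF finD])
    have e2: "18 * (\<Sum>u\<in>Dz. \<Sum>i\<in>I. Off u i + Dg u) = (\<Sum>u\<in>Dz. 18 * (\<Sum>i\<in>I. Off u i + Dg u))"
      by (rule sum_distrib_left)
    have e3: "(\<Sum>u\<in>D. (if u = 0 then 2 * N else 0) + (if u \<noteq> 0 \<and> gcd2 u dvd \<tau> then 18 * (\<Sum>i\<in>I. Off u i + Dg u) else 0))
       = (\<Sum>u\<in>D. (if u = 0 then 2 * N else 0)) + (\<Sum>u\<in>D. (if u \<noteq> 0 \<and> gcd2 u dvd \<tau> then 18 * (\<Sum>i\<in>I. Off u i + Dg u) else 0))"
      by (rule sum.distrib)
    show ?thesis by (simp only: e3 e2 e1)
  qed
  also have "(\<Sum>u\<in>D. (if u = 0 then 2 * N else 0)) \<le> 2 * N"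
    using finD N0 by (simp add: sum.delta)
  also have "(\<Sum>u\<in>Dz. \<Sum>i\<in>I. Off u i + Dg u) = (\<Sum>i\<in>I. \<Sum>u\<in>Dz. Off u i) + (\<Sum>i\<in>I. \<Sum>u\<in>Dz. Dg u)"
    by (simp add: sum.distrib sum.swap[of _ Dz] sum_distrib_left)
  also have "(\<Sum>i\<in>I. \<Sum>u\<in>Dz. Off u i) \<le> (\<Sum>i\<in>I. M)"
    using stepE MabM by (intro sum_mono) (meson order_trans)
  also have "(\<Sum>i\<in>I. \<Sum>u\<in>Dz. Dg u) \<le> (\<Sum>i\<in>I. N)"
  proof (intro sum_mono)
    fix i
    have "(\<Sum>u\<in>Dz. Dg u) \<le> (\<Sum>u\<in>D. Dg u)"
      using finD Dg0 unfolding Dz_def by (intro sum_mono2) auto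
    thus "(\<Sum>u\<in>Dz. Dg u) \<le> N" using stepF by simp
  qed
  finally have "(\<Sum>Q\<in>{Q\<in>quads_in U. is_parallelogram Q \<and> tauQ Q = \<tau>}. fQ f Q) \<le> 2 * N + 18 * (9 * M + 9 * N)"
    using cardI by simp
  also have "\<dots> \<le> 200 * (M + N)" using M0 N0 by simp
  finally show ?thesis unfolding M_def MS_def N_def .
qed


theorem mainTheorem5:
  "\<exists>K>0. \<forall>(C::real) (m::nat) (S::nat \<Rightarrow> pt2 set) (lam::nat \<Rightarrow> real) (\<tau>::int).
     C \<ge> 0 \<longrightarrow> m \<ge> 1 \<longrightarrow>
     (\<forall>j\<le>m. finite (S j) \<and> card (S j) \<le> 2 ^ j) \<longrightarrow>
     (\<forall>i\<le>m. \<forall>j\<le>m. i \<noteq> j \<longrightarrow> S i \<inter> S j = {}) \<longrightarrow>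
     (\<forall>j\<le>m. lam j \<ge> 0) \<longrightarrow>
     (\<forall>j\<le>m. \<forall>\<xi>\<in>S j. \<forall>l l'. is_line l \<and> is_line l' \<and> rpt \<xi> \<in> l \<and> rpt \<xi> \<in> l'
         \<and> real (lat_count l (S j)) \<ge> 2 powr (real j / 2 + C)
         \<and> real (lat_count l' (S j)) \<ge> 2 powr (real j / 2 + C) \<longrightarrow> l = l') \<longrightarrow>
     \<tau> \<ge> 0 \<longrightarrow>
     (let U = (\<Union>j\<le>m. S j); f = fS m S lam in
       (\<Sum>Q\<in>{Q\<in>quads_in U. is_parallelogram Q \<and> tauQ Q = \<tau>}. fQ f Q)
       \<le> K * (Max {(\<Sum>Q\<in>{Q\<in>Q0_ab C m S \<alpha> \<beta>. gcd2 (fst Q - snd (snd (snd Q))) dvd \<tau>}. fQ f Q)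
                   | \<alpha> \<beta>. \<alpha> \<in> {1,2,3::nat} \<and> \<beta> \<in> {1,2,3::nat}}
                + (\<Sum>\<xi>\<in>U. (f \<xi>)\<^sup>2)\<^sup>2))"
    apply (rule exI[of _ "200::real"])
  apply (intro conjI allI impI)
   apply simp
  unfolding Let_def
  apply (rule main_bound)
  by auto

end
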